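(* Let $A,B$ be closed linear relations in $X^2$ such that $\{A,B\}$ is a dual pair with $(A^* )_s|_{D(B)}=B_s$ and $(B^* )_s|_{D(A)}=A_s$. Suppose $B^*(0)\cap N(A^* )=\{0\}$, $A^*(0)\cap N(B^* )=\{0\}$, and $\tilde A\in\mathrm{Ext}\{A,B\}$. Then: (i) $$n(A^*,B)=\dim(D(B^* )/D(\tilde A))+\dim(D(A^* )/D(\tilde A^* ))=\dim(D(\tilde A)/D(A))+\dim(D(\tilde A^* )/D(B)).$$ (ii) If $\tilde A$ is a quasi-selfadjoint extension of $\{A,B\}$, then $n(A^*,B)$ is even and $$\tfrac{1}{2}n(A^*,B)=\dim(D(B^* )/D(\tilde A))=\dim(D(A^* )/D(\tilde A^* ))=\dim(D(\tilde A)/D(A))=\dim(D(\tilde A^* )/D(B)).$$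
   Context: $X$ is a complex Hilbert space; linear relations are linear subspaces of $X^2=X\times X$, with domain $D(T)$, $N(T)=\{x:(x,0)\in T\}$, $T(0)=\{y:(0,y)\in T\}$. Adjoint: $T^*=\{(f,g):\langle g,x\rangle=\langle f,y\rangle\ \forall(x,y)\in T\}$. For closed $T$: $T_\infty=\{(0,y)\in T\}$, $T_s=T\ominus T_\infty$ (an operator with $D(T_s)=D(T)$). Closed relations $A,B$ form a dual pair $\{A,B\}$ if $A\subset B^*$ (equivalently $B\subset A^*$). $\mathrm{Ext}\{A,B\}$ is the set of closed relations $\tilde A$ with $A\subset\tilde A\subset B^*$. $n(A^*,B)=\dim(D(A^* )/D(B))$. An extension $\tilde A\in\mathrm{Ext}\{A,B\}$ is quasi-selfadjoint if $\dim(D(\tilde A)/D(A))=\dim(D(\tilde A^* )/D(B))$. *)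

theory Defs
  imports "HOL-Analysis.Analysis" "HOL-Library.Extended_Nat"
begin

class chilbert_space = real_normed_vector + complete_space +
  fixes scaleC :: "complex \<Rightarrow> 'a \<Rightarrow> 'a"
    and cinner :: "'a \<Rightarrow> 'a \<Rightarrow> complex"
  assumes scaleC_add_right: "scaleC a (x + y) = scaleC a x + scaleC a y"
    and scaleC_add_left: "scaleC (a + b) x = scaleC a x + scaleC b x"
    and scaleC_scaleC: "scaleC a (scaleC b x) = scaleC (a * b) x"
    and scaleC_one: "scaleC 1 x = x"
    and scaleR_scaleC: "scaleR r x = scaleC (complex_of_real r) x"
    and cinner_commute: "cinner x y = cnj (cinner y x)"
    and cinner_add_left: "cinner (x + y) z = cinner x z + cinner y z"
    and cinner_scaleC_left: "cinner (scaleC a x) y = a * cinner x y"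
    and cinner_ge_zero: "0 \<le> Re (cinner x x)"
    and cinner_eq_zero_iff: "cinner x x = 0 \<longleftrightarrow> x = 0"
    and norm_eq_sqrt_cinner: "norm x = sqrt (Re (cinner x x))"

definition lin_rel :: "('a::chilbert_space \<times> 'a) set \<Rightarrow> bool" where
  "lin_rel T \<longleftrightarrow> (0, 0) \<in> T \<and> (\<forall>p\<in>T. \<forall>q\<in>T. p + q \<in> T)
     \<and> (\<forall>c x y. (x, y) \<in> T \<longrightarrow> (scaleC c x, scaleC c y) \<in> T)"

definition closed_lin_rel :: "('a::chilbert_space \<times> 'a) set \<Rightarrow> bool" where
  "closed_lin_rel T \<longleftrightarrow> lin_rel T \<and> closed T"

definition rel_dom :: "('a::chilbert_space \<times> 'a) set \<Rightarrow> 'a set" where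
  "rel_dom T = {x. \<exists>y. (x, y) \<in> T}"

definition rel_ker :: "('a::chilbert_space \<times> 'a) set \<Rightarrow> 'a set" where
  "rel_ker T = {x. (x, 0) \<in> T}"

definition rel_mul :: "('a::chilbert_space \<times> 'a) set \<Rightarrow> 'a set" where
  "rel_mul T = {y. (0, y) \<in> T}"

definition rel_adj :: "('a::chilbert_space \<times> 'a) set \<Rightarrow> ('a \<times> 'a) set" where
  "rel_adj T = {(f, g). \<forall>(x, y)\<in>T. cinner g x = cinner f y}"

definition cinner2 :: "('a::chilbert_space \<times> 'a) \<Rightarrow> ('a \<times> 'a) \<Rightarrow> complex" where
  "cinner2 p q = cinner (fst p) (fst q) + cinner (snd p) (snd q)"

definition orth_diff :: "('a::chilbert_space \<times> 'a) set \<Rightarrow> ('a \<times> 'a) set \<Rightarrow> ('a \<times> 'a) set" where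
  "orth_diff T S = {p \<in> T. \<forall>q\<in>S. cinner2 p q = 0}"

definition rel_inf :: "('a::chilbert_space \<times> 'a) set \<Rightarrow> ('a \<times> 'a) set" where
  "rel_inf T = {p \<in> T. fst p = 0}"

definition rel_s :: "('a::chilbert_space \<times> 'a) set \<Rightarrow> ('a \<times> 'a) set" where
  "rel_s T = orth_diff T (rel_inf T)"

definition rel_restrict :: "('a::chilbert_space \<times> 'a) set \<Rightarrow> 'a set \<Rightarrow> ('a \<times> 'a) set" where
  "rel_restrict T S = {p \<in> T. fst p \<in> S}"

definition dual_pair :: "('a::chilbert_space \<times> 'a) set \<Rightarrow> ('a \<times> 'a) set \<Rightarrow> bool" where
  "dual_pair A B \<longleftrightarrow> closed_lin_rel A \<and> closed_lin_rel B \<and> A \<subseteq> rel_adj B"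

definition Ext :: "('a::chilbert_space \<times> 'a) set \<Rightarrow> ('a \<times> 'a) set \<Rightarrow> ('a \<times> 'a) set set" where
  "Ext A B = {At. closed_lin_rel At \<and> A \<subseteq> At \<and> At \<subseteq> rel_adj B}"

definition lin_indep_mod :: "'a::chilbert_space set \<Rightarrow> 'a set \<Rightarrow> bool" where
  "lin_indep_mod U F \<longleftrightarrow> finite F \<and>
     (\<forall>c. (\<Sum>x\<in>F. scaleC (c x) x) \<in> U \<longrightarrow> (\<forall>x\<in>F. c x = 0))"

text \<open>dim(V/U) for subspaces U \<subseteq> V, with value \<infinity> if infinite.\<close>
definition quot_dim :: "'a::chilbert_space set \<Rightarrow> 'a set \<Rightarrow> enat" where
  "quot_dim V U = Sup {enat (card F) | F. F \<subseteq> V \<and> lin_indep_mod U F}"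

definition def_num :: "('a::chilbert_space \<times> 'a) set \<Rightarrow> ('a \<times> 'a) set \<Rightarrow> enat" where
  "def_num A B = quot_dim (rel_dom (rel_adj A)) (rel_dom B)"

definition quasi_selfadjoint :: "('a::chilbert_space \<times> 'a) set \<Rightarrow> ('a \<times> 'a) set \<Rightarrow> ('a \<times> 'a) set \<Rightarrow> bool" where
  "quasi_selfadjoint A B At \<longleftrightarrow> At \<in> Ext A B \<and>
     quot_dim (rel_dom At) (rel_dom A) = quot_dim (rel_dom (rel_adj At)) (rel_dom B)"

end

theory Submission
  imports Defs
begin

lemma scaleC_zero_left[simp]: "scaleC 0 (x::'a::chilbert_space) = 0"
  using scaleR_scaleC[of 0 x] by simp
lemma scaleC_minus1[simp]: "scaleC (-1) (x::'a::chilbert_space) = - x"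
  using scaleR_scaleC[of "-1" x] by simp
lemma scaleC_zero_right[simp]: "scaleC a (0::'a::chilbert_space) = 0"
  using scaleC_add_right[of a "0::'a" 0] by simp
lemma scaleC_minus_right: "scaleC a (- (x::'a::chilbert_space)) = - scaleC a x"
  by (metis scaleC_minus1 scaleC_scaleC mult.commute)
lemma scaleC_diff_right: "scaleC a ((x::'a::chilbert_space) - y) = scaleC a x - scaleC a y"
  by (metis diff_conv_add_uminus scaleC_add_right scaleC_minus_right)
lemma scaleC_minus_left: "scaleC (- a) (x::'a::chilbert_space) = - scaleC a x"
  by (metis scaleC_minus1 scaleC_scaleC mult_minus1)
lemma scaleC_diff_left: "scaleC (a - b) (x::'a::chilbert_space) = scaleC a x - scaleC b x"
  by (metis diff_conv_add_uminus scaleC_add_left scaleC_minus_left)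
lemma scaleC_sum_right: "scaleC a (sum f F) = (\<Sum>i\<in>F. scaleC a (f i::'a::chilbert_space))"
  by (induct F rule: infinite_finite_induct) (auto simp: scaleC_add_right)

lemma cinner_zero_left[simp]: "cinner 0 (y::'a::chilbert_space) = 0"
  using cinner_add_left[of "0::'a" 0 y] by simp
lemma cinner_minus_left: "cinner (- x) (y::'a::chilbert_space) = - cinner x y"
  using cinner_scaleC_left[of "-1" x y] by simp
lemma cinner_diff_left: "cinner (x - z) (y::'a::chilbert_space) = cinner x y - cinner z y"
  by (metis diff_conv_add_uminus cinner_add_left cinner_minus_left)
lemma cinner_add_right: "cinner x (y + z::'a::chilbert_space) = cinner x y + cinner x z"
  by (metis cinner_commute cinner_add_left complex_cnj_add)
lemma cinner_scaleC_right: "cinner x (scaleC a (y::'a::chilbert_space)) = cnj a * cinner x y"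
  by (metis cinner_commute cinner_scaleC_left complex_cnj_mult)
lemma cinner_zero_right[simp]: "cinner x (0::'a::chilbert_space) = 0"
  by (metis cinner_commute cinner_zero_left complex_cnj_zero)
lemma cinner_minus_right: "cinner x (- y::'a::chilbert_space) = - cinner x y"
  by (metis cinner_commute cinner_minus_left complex_cnj_minus)
lemma cinner_diff_right: "cinner x (y - z::'a::chilbert_space) = cinner x y - cinner x z"
  by (metis diff_conv_add_uminus cinner_add_right cinner_minus_right)
lemma cinner_sum_left: "cinner (sum f F) (y::'a::chilbert_space) = (\<Sum>i\<in>F. cinner (f i) y)"
  by (induct F rule: infinite_finite_induct) (auto simp: cinner_add_left)
lemma cinner_self_real: "cinner x (x::'a::chilbert_space) = complex_of_real (Re (cinner x x))"
proof -
  have "Im (cinner x x) = Im (cnj (cinner x x))" using cinner_commute[of x x] by simp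
  then have "Im (cinner x x) = 0" by simp
  then show ?thesis by (simp add: complex_eq_iff)
qed
lemma norm_sq_cinner: "(norm (x::'a::chilbert_space))^2 = Re (cinner x x)"
  using norm_eq_sqrt_cinner[of x] cinner_ge_zero[of x] by simp
lemma cinner_self_eq: "cinner x (x::'a::chilbert_space) = complex_of_real ((norm x)^2)"
  using cinner_self_real norm_sq_cinner by metis

instantiation prod :: (chilbert_space, chilbert_space) chilbert_space
begin
definition scaleC_prod_def: "scaleC c p = (scaleC c (fst p), scaleC c (snd p))"
definition cinner_prod_def: "cinner p q = cinner (fst p) (fst q) + cinner (snd p) (snd q)"
instance proof
  fix a b :: complex and x y :: "'a \<times> 'b" and r :: real
  show "scaleC a (x + y) = scaleC a x + scaleC a y"
    by (simp add: scaleC_prod_def scaleC_add_right)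
  show "scaleC (a + b) x = scaleC a x + scaleC b x"
    by (simp add: scaleC_prod_def scaleC_add_left)
  show "scaleC a (scaleC b x) = scaleC (a * b) x"
    by (simp add: scaleC_prod_def scaleC_scaleC)
  show "scaleC 1 x = x" by (simp add: scaleC_prod_def scaleC_one)
  show "scaleR r x = scaleC (complex_of_real r) x"
    by (cases x) (simp add: scaleC_prod_def scaleR_scaleC)
  show "cinner x y = cnj (cinner y x)"
    by (simp add: cinner_prod_def cinner_commute[of "fst x"] cinner_commute[of "snd x"])
  show "cinner (x + y) z = cinner x z + cinner y z" for z :: "'a \<times> 'b"
    by (simp add: cinner_prod_def cinner_add_left)
  show "cinner (scaleC a x) y = a * cinner x y"
    by (simp add: cinner_prod_def scaleC_prod_def cinner_scaleC_left algebra_simps)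
  show "0 \<le> Re (cinner x x)"
    by (simp add: cinner_prod_def cinner_ge_zero add_nonneg_nonneg)
  show "(cinner x x = 0) = (x = 0)"
  proof
    assume "cinner x x = 0"
    then have "Re (cinner x x) = 0" by simp
    then have "(norm (fst x))^2 + (norm (snd x))^2 = 0"
      by (simp add: cinner_prod_def norm_sq_cinner)
    then have "fst x = 0" "snd x = 0" by (simp_all add: add_nonneg_eq_0_iff)
    then show "x = 0" by (simp add: prod_eq_iff)
  qed (simp add: cinner_prod_def)
  show "norm x = sqrt (Re (cinner x x))"
    by (simp add: norm_prod_def cinner_prod_def norm_sq_cinner)
qed
end

lemma scaleC_Pair[simp]: "scaleC c (a, b) = (scaleC c a, scaleC c b)"
  by (simp add: scaleC_prod_def)
lemma cinner_Pair: "cinner (a, b) (c, d) = cinner a c + cinner b d"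
  by (simp add: cinner_prod_def)
lemma cinner2_eq: "cinner2 p q = cinner p q"
  by (simp add: cinner2_def cinner_prod_def)

lemma parallelogram:
  "(norm (x + y::'a::chilbert_space))^2 + (norm (x - y))^2 = 2 * (norm x)^2 + 2 * (norm y)^2"
  by (simp add: norm_sq_cinner cinner_add_left cinner_add_right cinner_diff_left cinner_diff_right)

lemma orth_from_min:
  fixes w s :: "'a::chilbert_space"
  assumes min: "\<And>t. norm w \<le> norm (w - scaleC t s)"
  shows "cinner w s = 0"
proof -
  define \<alpha> where "\<alpha> = cinner w s"
  define A where "A = (cmod \<alpha>)^2"
  define \<sigma> where "\<sigma> = (norm s)^2"
  define \<epsilon> where "\<epsilon> = 1 / (\<sigma> + 1)"
  have s0: "0 \<le> \<sigma>" by (simp add: \<sigma>_def)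
  have e0: "0 < \<epsilon>" using s0 by (simp add: \<epsilon>_def)
  have es: "\<epsilon> * \<sigma> < 1" using s0 by (simp add: \<epsilon>_def field_simps)
  have gen: "(norm (w - scaleC t s))^2 = (norm w)^2 - 2 * Re (cnj t * \<alpha>) + (cmod t)^2 * \<sigma>" for t
  proof -
    have csw: "cinner s w = cnj \<alpha>" by (simp add: \<alpha>_def cinner_commute[of s w])
    have "cinner (w - scaleC t s) (w - scaleC t s)
        = cinner w w - cnj t * \<alpha> - t * cnj \<alpha> + (t * cnj t) * cinner s s"
      by (simp add: cinner_diff_left cinner_diff_right cinner_scaleC_left cinner_scaleC_right csw \<alpha>_def algebra_simps)
    then have "Re (cinner (w - scaleC t s) (w - scaleC t s))
        = Re (cinner w w) - Re (cnj t * \<alpha>) - Re (t * cnj \<alpha>) + Re ((t * cnj t) * cinner s s)"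
      by simp
    moreover have "Re (t * cnj \<alpha>) = Re (cnj t * \<alpha>)"
    proof -
      have "t * cnj \<alpha> = cnj (cnj t * \<alpha>)" by simp
      then show ?thesis by (metis cnj.sel(1))
    qed
    moreover have "Re ((t * cnj t) * cinner s s) = (cmod t)^2 * \<sigma>"
      by (simp add: \<sigma>_def cinner_self_eq flip: complex_norm_square of_real_mult)
    ultimately show ?thesis by (simp add: norm_sq_cinner)
  qed
  define t where "t = complex_of_real \<epsilon> * \<alpha>"
  have "Re (cnj t * \<alpha>) = \<epsilon> * A"
    using cmod_power2[of \<alpha>] by (simp add: t_def A_def power2_eq_square algebra_simps)
  moreover have "(cmod t)^2 = \<epsilon>^2 * A"
    using e0 by (simp add: t_def A_def norm_mult power_mult_distrib)
  ultimately have eq: "(norm (w - scaleC t s))^2 = (norm w)^2 - (2 * \<epsilon> * A - \<epsilon>^2 * A * \<sigma>)"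
    using gen[of t] by simp
  have "(norm w)^2 \<le> (norm (w - scaleC t s))^2"
    using min[of t] by (simp add: power_mono)
  then have "2 * \<epsilon> * A \<le> \<epsilon>^2 * A * \<sigma>" using eq by simp
  then have "\<epsilon> * (2 * A) \<le> \<epsilon> * ((\<epsilon> * \<sigma>) * A)" by (simp add: power2_eq_square algebra_simps)
  then have "2 * A \<le> (\<epsilon> * \<sigma>) * A" using e0 by (rule mult_left_le_imp_le)
  moreover have "(\<epsilon> * \<sigma>) * A \<le> A" using es mult_left_le_one_le[of A "\<epsilon> * \<sigma>"] e0 s0 by (simp add: A_def mult.commute)
  ultimately have "A \<le> 0" by linarith
  then show ?thesis by (simp add: A_def \<alpha>_def)
qed

lemma proj_exists:
  fixes S :: "'a::chilbert_space set"
  assumes cl: "closed S" and z0: "0 \<in> S" and add: "\<And>x y. x \<in> S \<Longrightarrow> y \<in> S \<Longrightarrow> x + y \<in> S"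
    and sc: "\<And>c x. x \<in> S \<Longrightarrow> scaleC c x \<in> S"
  shows "\<exists>p\<in>S. \<forall>s\<in>S. cinner (z - p) s = 0"
proof -
  define d where "d = Inf ((\<lambda>s. norm (z - s)) ` S)"
  have bdd: "bdd_below ((\<lambda>s. norm (z - s)) ` S)" by (auto intro: bdd_belowI[of _ 0])
  have dle: "\<And>q. q \<in> S \<Longrightarrow> d \<le> norm (z - q)" unfolding d_def using bdd by (auto intro: cInf_lower)
  have d0: "0 \<le> d" unfolding d_def using z0 by (auto intro: cInf_greatest)
  have "\<exists>s\<in>S. norm (z - s) < d + inverse (real (Suc n))" for n
  proof -
    have lt: "Inf ((\<lambda>s. norm (z - s)) ` S) < d + inverse (real (Suc n))" by (simp add: d_def)
    have ne: "(\<lambda>s. norm (z - s)) ` S \<noteq> {}" using z0 by blast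
    from cInf_lessD[OF ne lt] show ?thesis by auto
  qed
  then obtain s where sS: "\<And>n. s n \<in> S" and sl: "\<And>n. norm (z - s n) < d + inverse (real (Suc n))"
    by (metis (no_types))
  have key: "(norm (s n - s k))^2 \<le> 2 * (2 * d + 1) * (inverse (real (Suc n)) + inverse (real (Suc k)))" for n k
  proof -
    define a where "a = inverse (real (Suc n))"
    define b where "b = inverse (real (Suc k))"
    have a01: "0 \<le> a" "a \<le> 1" by (auto simp: a_def field_simps)
    have b01: "0 \<le> b" "b \<le> 1" by (auto simp: b_def field_simps)
    define mid where "mid = scaleR (1/2) (s n + s k)"
    have "mid \<in> S" unfolding mid_def scaleR_scaleC using sS add sc by blast
    then have dm: "d \<le> norm (z - mid)" by (rule dle)
    have "(z - s n) + (z - s k) = scaleR 2 (z - mid)" by (simp add: mid_def algebra_simps scaleR_2)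
    then have n1: "norm ((z - s n) + (z - s k)) = 2 * norm (z - mid)" by simp
    have n2: "(z - s n) - (z - s k) = s k - s n" by simp
    have par: "(norm ((z - s n) + (z - s k)))^2 + (norm (s k - s n))^2
        = 2 * (norm (z - s n))^2 + 2 * (norm (z - s k))^2"
      using parallelogram[of "z - s n" "z - s k"] n2 by simp
    have "(2 * d)^2 \<le> (norm ((z - s n) + (z - s k)))^2" using n1 dm d0 by (simp add: power_mono)
    moreover have "(norm (z - s n))^2 \<le> (d + a)^2"
      using sl[of n] by (simp add: a_def power_mono less_imp_le)
    moreover have "(norm (z - s k))^2 \<le> (d + b)^2"
      using sl[of k] by (simp add: b_def power_mono less_imp_le)
    moreover have "(d + a)^2 \<le> d^2 + (2 * d + 1) * a"
      using a01 d0 by (simp add: power2_eq_square algebra_simps mult_left_le_one_le mult_left_le)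
    moreover have "(d + b)^2 \<le> d^2 + (2 * d + 1) * b"
      using b01 d0 by (simp add: power2_eq_square algebra_simps mult_left_le_one_le mult_left_le)
    ultimately have "(norm (s k - s n))^2 \<le> 2 * (2 * d + 1) * (a + b)"
      using par by (simp add: power2_eq_square algebra_simps)
    then show ?thesis by (simp add: a_def b_def norm_minus_commute)
  qed
  have "Cauchy s"
  proof (rule CauchyI)
    fix e :: real assume e: "0 < e"
    obtain M :: nat where M: "4 * (2 * d + 1) / e^2 < real M" using reals_Archimedean2 by blast
    have Mpos: "0 < real (Suc M)" by simp
    have e2: "0 < e^2" using e by simp
    have "4 * (2 * d + 1) < e^2 * real (Suc M)"
      using M e2 by (simp add: field_simps; linarith)
    then have lt: "2 * (2 * d + 1) * (2 * inverse (real (Suc M))) < e^2"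
      using Mpos by (simp add: field_simps)
    show "\<exists>M. \<forall>m\<ge>M. \<forall>n\<ge>M. norm (s m - s n) < e"
    proof (intro exI allI impI)
      fix m n assume "M \<le> m" "M \<le> n"
      then have "inverse (real (Suc m)) \<le> inverse (real (Suc M))" "inverse (real (Suc n)) \<le> inverse (real (Suc M))"
        by (auto simp: field_simps)
      then have "inverse (real (Suc m)) + inverse (real (Suc n)) \<le> 2 * inverse (real (Suc M))" by linarith
      then have "2 * (2 * d + 1) * (inverse (real (Suc m)) + inverse (real (Suc n))) \<le> 2 * (2 * d + 1) * (2 * inverse (real (Suc M)))"
        using d0 by (intro mult_left_mono) auto
      then have "(norm (s m - s n))^2 < e^2" using key[of m n] lt by linarith
      then show "norm (s m - s n) < e" using e by (simp add: power_less_imp_less_base)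
    qed
  qed
  then obtain p where lim: "s \<longlonglongrightarrow> p" using Cauchy_convergent convergent_def by blast
  have pS: "p \<in> S" using closed_sequentially[OF cl] sS lim by blast
  have l1: "(\<lambda>n. norm (z - s n)) \<longlonglongrightarrow> norm (z - p)" by (intro tendsto_intros lim)
  have "norm (z - p) \<le> d"
    using LIMSEQ_le[OF l1 LIMSEQ_inverse_real_of_nat_add[of d]] sl less_imp_le by blast
  then have min: "norm (z - p) \<le> norm ((z - p) - scaleC t q)" if "q \<in> S" for t q
  proof -
    have "p + scaleC t q \<in> S" using pS that sc add by blast
    then have "d \<le> norm (z - (p + scaleC t q))" by (rule dle)
    then show ?thesis using \<open>norm (z - p) \<le> d\<close> by (simp add: algebra_simps)
  qed
  show ?thesis using pS orth_from_min[OF min] by blast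
qed

definition csub :: "'a::chilbert_space set \<Rightarrow> bool" where
  "csub U \<longleftrightarrow> 0 \<in> U \<and> (\<forall>x\<in>U. \<forall>y\<in>U. x + y \<in> U) \<and> (\<forall>c. \<forall>x\<in>U. scaleC c x \<in> U)"

lemma csub_0: "csub U \<Longrightarrow> 0 \<in> U" by (simp add: csub_def)
lemma csub_add: "csub U \<Longrightarrow> x \<in> U \<Longrightarrow> y \<in> U \<Longrightarrow> x + y \<in> U" by (simp add: csub_def)
lemma csub_scale: "csub U \<Longrightarrow> x \<in> U \<Longrightarrow> scaleC c x \<in> U" by (simp add: csub_def)
lemma csub_minus: "csub U \<Longrightarrow> x \<in> U \<Longrightarrow> - x \<in> U"
  using csub_scale[of U x "-1"] by simp
lemma csub_diff: "csub U \<Longrightarrow> x \<in> U \<Longrightarrow> y \<in> U \<Longrightarrow> x - y \<in> U"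
  by (metis csub_add csub_minus diff_conv_add_uminus)
lemma csub_sum: "csub U \<Longrightarrow> (\<And>i. i \<in> F \<Longrightarrow> f i \<in> U) \<Longrightarrow> sum f F \<in> U"
  by (induct F rule: infinite_finite_induct) (auto simp: csub_0 csub_add)
lemma csub_lincomb: "csub U \<Longrightarrow> (\<And>i. i \<in> F \<Longrightarrow> f i \<in> U) \<Longrightarrow> (\<Sum>i\<in>F. scaleC (c i) (f i)) \<in> U"
  by (rule csub_sum) (auto intro: csub_scale)

lemma lin_rel_csub: "lin_rel T \<longleftrightarrow> csub T"
  unfolding lin_rel_def csub_def zero_prod_def
  by (metis scaleC_Pair prod.collapse)

lemma lin_indep_mod_subset:
  assumes "lin_indep_mod U F" "G \<subseteq> F" shows "lin_indep_mod U G"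
  unfolding lin_indep_mod_def
proof (intro conjI allI impI ballI)
  show "finite G" using assms finite_subset by (auto simp: lin_indep_mod_def)
  fix c x assume s: "(\<Sum>x\<in>G. scaleC (c x) x) \<in> U" and x: "x \<in> G"
  define c' where "c' = (\<lambda>v. if v \<in> G then c v else 0)"
  have "(\<Sum>v\<in>F. scaleC (c' v) v) = (\<Sum>v\<in>F. if v \<in> G then scaleC (c v) v else 0)"
    by (rule sum.cong) (auto simp: c'_def)
  also have "\<dots> = (\<Sum>v\<in>F \<inter> G. scaleC (c v) v)"
    using assms by (simp add: sum.inter_restrict lin_indep_mod_def)
  also have "F \<inter> G = G" using assms by blast
  finally have "(\<Sum>v\<in>F. scaleC (c' v) v) \<in> U" using s by simp
  then have "c' x = 0" using assms x by (auto simp: lin_indep_mod_def)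
  then show "c x = 0" using x by (simp add: c'_def)
qed

lemma qd_transfer:
  fixes V U :: "'a::chilbert_space set" and V' U' :: "'b::chilbert_space set"
    and R :: "('a \<times> 'b) set"
  assumes R: "csub R" and U: "csub U" and U'0: "0 \<in> U'"
    and h2: "\<And>x. x \<in> V \<Longrightarrow> \<exists>w x'. (w, x') \<in> R \<and> x' \<in> V' \<and> x - w \<in> U"
    and h3: "\<And>w x'. (w, x') \<in> R \<Longrightarrow> x' \<in> U' \<Longrightarrow> w \<in> U"
  shows "quot_dim V U \<le> quot_dim V' U'"
  unfolding quot_dim_def
proof (rule Sup_least, clarify)
  fix F assume FV: "F \<subseteq> V" and Fi: "lin_indep_mod U F"
  have fin: "finite F" using Fi by (simp add: lin_indep_mod_def)
  have "\<forall>x\<in>F. \<exists>wx. (fst wx, snd wx) \<in> R \<and> snd wx \<in> V' \<and> x - fst wx \<in> U"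
    using h2 FV by fastforce
  then obtain g where g: "\<And>x. x \<in> F \<Longrightarrow> (fst (g x), snd (g x)) \<in> R \<and> snd (g x) \<in> V' \<and> x - fst (g x) \<in> U"
    by metis
  define W where "W = (\<lambda>x. fst (g x))"
  define X where "X = (\<lambda>x. snd (g x))"
  have WX: "\<And>x. x \<in> F \<Longrightarrow> (W x, X x) \<in> R" and XV: "\<And>x. x \<in> F \<Longrightarrow> X x \<in> V'"
    and WU: "\<And>x. x \<in> F \<Longrightarrow> x - W x \<in> U"
    using g by (auto simp: W_def X_def)
  have comb: "(\<Sum>x\<in>F. scaleC (c x) (W x)) \<in> U" if "(\<Sum>x\<in>F. scaleC (c x) (X x)) \<in> U'" for c
  proof -
    have "(\<Sum>x\<in>F. scaleC (c x) (W x, X x)) \<in> R"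
      using WX by (intro csub_lincomb[OF R])
    moreover have "(\<Sum>x\<in>F. scaleC (c x) (W x, X x)) = ((\<Sum>x\<in>F. scaleC (c x) (W x)), (\<Sum>x\<in>F. scaleC (c x) (X x)))"
      by (simp add: prod_eq_iff fst_sum snd_sum)
    ultimately show ?thesis using h3 that by auto
  qed
  have comb2: "\<forall>x\<in>F. c x = 0" if "(\<Sum>x\<in>F. scaleC (c x) (X x)) \<in> U'" for c
  proof -
    have "(\<Sum>x\<in>F. scaleC (c x) (W x)) \<in> U" using comb that by blast
    moreover have "(\<Sum>x\<in>F. scaleC (c x) (x - W x)) \<in> U" using WU by (intro csub_lincomb[OF U])
    ultimately have "(\<Sum>x\<in>F. scaleC (c x) (W x)) + (\<Sum>x\<in>F. scaleC (c x) (x - W x)) \<in> U"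
      by (rule csub_add[OF U])
    also have "(\<Sum>x\<in>F. scaleC (c x) (W x)) + (\<Sum>x\<in>F. scaleC (c x) (x - W x)) = (\<Sum>x\<in>F. scaleC (c x) x)"
      by (simp add: scaleC_diff_right flip: sum.distrib)
    finally show ?thesis using Fi by (auto simp: lin_indep_mod_def)
  qed
  have inj: "inj_on X F"
  proof (rule inj_onI, rule ccontr)
    fix x y assume x: "x \<in> F" and y: "y \<in> F" and eq: "X x = X y" and ne: "x \<noteq> y"
    have "(W x, X x) - (W y, X y) \<in> R" using WX x y csub_diff[OF R] by blast
    then have "(W x - W y, 0) \<in> R" using eq by simp
    then have "W x - W y \<in> U" using h3 U'0 by blast
    then have "(W x - W y) + ((x - W x) - (y - W y)) \<in> U"
      using csub_add[OF U \<open>W x - W y \<in> U\<close> csub_diff[OF U WU[OF x] WU[OF y]]] by blast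
    then have xy: "x - y \<in> U" by (simp add: algebra_simps)
    have "{x, y} \<subseteq> F" using x y by simp
    then have Fxy: "lin_indep_mod U {x, y}" by (rule lin_indep_mod_subset[OF Fi])
    define c where "c = (\<lambda>v. if v = x then (1::complex) else -1)"
    have "(\<Sum>v\<in>{x, y}. scaleC (c v) v) = x - y" using ne by (simp add: c_def scaleC_one)
    then have "(\<Sum>v\<in>{x, y}. scaleC (c v) v) \<in> U" using xy by simp
    then have "c x = 0" using Fxy[unfolded lin_indep_mod_def] by (elim conjE allE[of _ c]) simp
    then show False by (simp add: c_def)
  qed
  have "lin_indep_mod U' (X ` F)"
    unfolding lin_indep_mod_def
  proof (intro conjI allI impI)
    show "finite (X ` F)" using fin by simp
    fix c' assume "(\<Sum>y\<in>X ` F. scaleC (c' y) y) \<in> U'"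
    then have "(\<Sum>x\<in>F. scaleC (c' (X x)) (X x)) \<in> U'" by (simp add: sum.reindex[OF inj])
    then have "\<forall>x\<in>F. c' (X x) = 0" using comb2[of "\<lambda>x. c' (X x)"] by blast
    then show "\<forall>y\<in>X ` F. c' y = 0" by blast
  qed
  moreover have "X ` F \<subseteq> V'" using XV by blast
  moreover have "card (X ` F) = card F" using card_image[OF inj] .
  ultimately show "enat (card F) \<le> Sup {enat (card F) |F. F \<subseteq> V' \<and> lin_indep_mod U' F}"
    by (intro Sup_upper) (metis (mono_tags, lifting) mem_Collect_eq)
qed

lemma qd_mono_V: "V \<subseteq> V2 \<Longrightarrow> quot_dim V U \<le> quot_dim V2 U"
  unfolding quot_dim_def by (rule Sup_subset_mono) blast

lemma qd_witness:
  assumes "enat k \<le> quot_dim V U"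
  shows "\<exists>F\<subseteq>V. lin_indep_mod U F \<and> card F = k"
proof (cases k)
  case 0
  then show ?thesis by (intro exI[of _ "{}"]) (simp add: lin_indep_mod_def)
next
  case (Suc j)
  then have "enat j < Sup {enat (card F) |F. F \<subseteq> V \<and> lin_indep_mod U F}"
    using assms by (simp add: quot_dim_def Suc_ile_eq)
  then obtain x where "x \<in> {enat (card F) |F. F \<subseteq> V \<and> lin_indep_mod U F}" "enat j < x"
    using less_Sup_iff by blast
  then obtain F where F: "F \<subseteq> V" "lin_indep_mod U F" "j < card F" by auto
  then have "k \<le> card F" using Suc by simp
  then obtain G where "G \<subseteq> F" "card G = k" by (meson obtain_subset_with_card_n)
  then show ?thesis using F lin_indep_mod_subset by blast
qed

lemma qd_upper: "F \<subseteq> V \<Longrightarrow> lin_indep_mod U F \<Longrightarrow> enat (card F) \<le> quot_dim V U"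
  unfolding quot_dim_def by (rule Sup_upper) blast

lemma enat_add_le_from_fin:
  fixes x y z :: enat
  assumes "\<And>k1 k2. enat k1 \<le> x \<Longrightarrow> enat k2 \<le> y \<Longrightarrow> enat (k1 + k2) \<le> z"
  shows "x + y \<le> z"
proof (cases z)
  case infinity then show ?thesis by simp
next
  case (enat m)
  have x: "x \<noteq> \<infinity>"
  proof
    assume "x = \<infinity>" then have "enat (Suc m + 0) \<le> z" using assms[of "Suc m" 0] by (simp add: zero_enat_def[symmetric])
    then show False using enat by simp
  qed
  have y: "y \<noteq> \<infinity>"
  proof
    assume "y = \<infinity>" then have "enat (0 + Suc m) \<le> z" using assms[of 0 "Suc m"] by (simp add: zero_enat_def[symmetric])
    then show False using enat by simp
  qed
  from x y obtain a b where "x = enat a" "y = enat b" by auto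
  then show ?thesis using assms[of a b] by simp
qed

lemma qd_add_ge:
  fixes V W U :: "'a::chilbert_space set"
  assumes W: "csub W" and UW: "U \<subseteq> W" and WV: "W \<subseteq> V"
  shows "quot_dim V W + quot_dim W U \<le> quot_dim V U"
proof (rule enat_add_le_from_fin)
  fix k1 k2 assume "enat k1 \<le> quot_dim V W" "enat k2 \<le> quot_dim W U"
  then obtain F1 F2 where F1: "F1 \<subseteq> V" "lin_indep_mod W F1" "card F1 = k1"
    and F2: "F2 \<subseteq> W" "lin_indep_mod U F2" "card F2 = k2"
    using qd_witness by metis
  have fin1: "finite F1" and fin2: "finite F2" using F1 F2 by (auto simp: lin_indep_mod_def)
  have disj: "F1 \<inter> F2 = {}"
  proof (rule ccontr)
    assume "F1 \<inter> F2 \<noteq> {}" then obtain x where x: "x \<in> F1" "x \<in> F2" by blast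
    have "lin_indep_mod W {x}" using lin_indep_mod_subset[OF F1(2)] x by blast
    moreover have "(\<Sum>v\<in>{x}. scaleC ((\<lambda>_. 1) v) v) \<in> W" using x F2 by (simp add: scaleC_one subsetD)
    ultimately have "(\<lambda>_. 1::complex) x = 0" unfolding lin_indep_mod_def by (elim conjE allE[of _ "\<lambda>_. 1"]) simp
    then show False by simp
  qed
  have "lin_indep_mod U (F1 \<union> F2)"
    unfolding lin_indep_mod_def
  proof (intro conjI allI impI)
    show "finite (F1 \<union> F2)" using fin1 fin2 by simp
    fix c assume s: "(\<Sum>x\<in>F1 \<union> F2. scaleC (c x) x) \<in> U"
    have split: "(\<Sum>x\<in>F1 \<union> F2. scaleC (c x) x) = (\<Sum>x\<in>F1. scaleC (c x) x) + (\<Sum>x\<in>F2. scaleC (c x) x)"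
      using fin1 fin2 disj by (simp add: sum.union_disjoint)
    have s2W: "(\<Sum>x\<in>F2. scaleC (c x) x) \<in> W" using F2(1) by (intro csub_lincomb[OF W]) auto
    have "(\<Sum>x\<in>F1. scaleC (c x) x) = (\<Sum>x\<in>F1 \<union> F2. scaleC (c x) x) - (\<Sum>x\<in>F2. scaleC (c x) x)"
      using split by simp
    also have "\<dots> \<in> W" using s UW s2W by (intro csub_diff[OF W]) auto
    finally have c1: "\<forall>x\<in>F1. c x = 0" using F1(2) unfolding lin_indep_mod_def by blast
    then have "(\<Sum>x\<in>F1. scaleC (c x) x) = 0" by simp
    then have "(\<Sum>x\<in>F2. scaleC (c x) x) \<in> U" using s split by simp
    then have "\<forall>x\<in>F2. c x = 0" using F2(2) unfolding lin_indep_mod_def by blast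
    then show "\<forall>x\<in>F1 \<union> F2. c x = 0" using c1 by blast
  qed
  moreover have "F1 \<union> F2 \<subseteq> V" using F1 F2 WV by blast
  moreover have "card (F1 \<union> F2) = k1 + k2" using F1 F2 fin1 fin2 disj by (simp add: card_Un_disjoint)
  ultimately show "enat (k1 + k2) \<le> quot_dim V U" using qd_upper by metis
qed

lemma qd_add_le:
  fixes V W U :: "'a::chilbert_space set"
  assumes V: "csub V" and W: "csub W" and U: "csub U"
  shows "quot_dim V U \<le> quot_dim V W + quot_dim W U"
  unfolding quot_dim_def[of V U]
proof (rule Sup_least, clarify)
  interpret cv: vector_space "scaleC :: complex \<Rightarrow> 'a \<Rightarrow> 'a"
    by unfold_locales (simp_all add: scaleC_add_right scaleC_add_left scaleC_scaleC scaleC_one)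
  fix F assume FV: "F \<subseteq> V" and Fi: "lin_indep_mod U F"
  have fin: "finite F" using Fi by (simp add: lin_indep_mod_def)
  define S where "S = cv.span F"
  have SU: "u = 0" if "u \<in> S" "u \<in> U" for u
  proof -
    have "u \<in> range (\<lambda>d. \<Sum>v\<in>F. scaleC (d v) v)" using that(1) cv.span_finite[OF fin] by (simp add: S_def)
    then obtain d where d: "u = (\<Sum>v\<in>F. scaleC (d v) v)" by blast
    then have "\<forall>v\<in>F. d v = 0" using Fi that(2) by (auto simp: lin_indep_mod_def)
    then show ?thesis using d by simp
  qed
  have indepF: "cv.independent F"
  proof (rule cv.independent_if_scalars_zero[OF fin])
    fix f x assume "(\<Sum>x\<in>F. scaleC (f x) x) = 0" "x \<in> F"
    then show "f x = 0" using Fi csub_0[OF U] by (auto simp: lin_indep_mod_def)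
  qed
  have SV: "S \<subseteq> V" unfolding S_def
    by (rule cv.span_minimal[OF FV]) (use V in \<open>simp add: csub_def cv.subspace_def\<close>)
  obtain H where H: "H \<subseteq> S \<inter> W" "cv.independent H" "S \<inter> W \<subseteq> cv.span H"
    using cv.maximal_independent_subset by blast
  have finH: "finite H" using cv.independent_span_bound[OF fin H(2)] H(1) by (auto simp: S_def)
  obtain B where B: "H \<subseteq> B" "B \<subseteq> S" "cv.independent B" "S \<subseteq> cv.span B"
    using cv.maximal_independent_subset_extend[of H S] H by blast
  have finB: "finite B" using cv.independent_span_bound[OF fin B(3)] B(2) by (auto simp: S_def)
  have cardFB: "card F \<le> card B"
    using cv.independent_span_bound[OF finB indepF] B(4) cv.span_superset[of F] by (auto simp: S_def)
  define G where "G = B - H"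
  have finG: "finite G" using finB by (simp add: G_def)
  have cardB: "card B = card G + card H"
    using B(1) finB finH by (simp add: G_def card_Diff_subset card_mono)
  have Hi: "lin_indep_mod U H"
    unfolding lin_indep_mod_def
  proof (intro conjI allI impI)
    show "finite H" by (rule finH)
    fix c assume cU: "(\<Sum>h\<in>H. scaleC (c h) h) \<in> U"
    have "(\<Sum>h\<in>H. scaleC (c h) h) \<in> S" unfolding S_def
      using H(1) by (intro cv.span_sum cv.span_scale) (auto simp: S_def)
    then have "(\<Sum>h\<in>H. scaleC (c h) h) = 0" using SU cU by blast
    then show "\<forall>h\<in>H. c h = 0" using H(2) finH cv.dependent_finite by blast
  qed
  have Gi: "lin_indep_mod W G"
    unfolding lin_indep_mod_def
  proof (intro conjI allI impI)
    show "finite G" by (rule finG)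
    fix c assume cW: "(\<Sum>g\<in>G. scaleC (c g) g) \<in> W"
    have "(\<Sum>g\<in>G. scaleC (c g) g) \<in> S"
      using B(2) unfolding S_def by (intro cv.span_sum cv.span_scale) (auto simp: G_def S_def)
    then have "(\<Sum>g\<in>G. scaleC (c g) g) \<in> cv.span H" using cW H(3) by blast
    then have "(\<Sum>g\<in>G. scaleC (c g) g) \<in> range (\<lambda>d. \<Sum>h\<in>H. scaleC (d h) h)"
      using cv.span_finite[OF finH] by simp
    then obtain d where d: "(\<Sum>g\<in>G. scaleC (c g) g) = (\<Sum>h\<in>H. scaleC (d h) h)" by blast
    define e where "e = (\<lambda>v. if v \<in> G then c v else - d v)"
    have GH: "B = G \<union> H" "G \<inter> H = {}" using B(1) by (auto simp: G_def)
    have "(\<Sum>v\<in>B. scaleC (e v) v) = (\<Sum>v\<in>G. scaleC (e v) v) + (\<Sum>v\<in>H. scaleC (e v) v)"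
      using GH finG finH by (simp add: sum.union_disjoint)
    also have "(\<Sum>v\<in>G. scaleC (e v) v) = (\<Sum>g\<in>G. scaleC (c g) g)"
      by (rule sum.cong) (auto simp: e_def)
    also have "(\<Sum>v\<in>H. scaleC (e v) v) = - (\<Sum>h\<in>H. scaleC (d h) h)"
    proof -
      have "(\<Sum>v\<in>H. scaleC (e v) v) = (\<Sum>h\<in>H. - scaleC (d h) h)"
        using GH by (intro sum.cong) (auto simp: e_def scaleC_minus_left)
      then show ?thesis by (simp add: sum_negf)
    qed
    finally have "(\<Sum>v\<in>B. scaleC (e v) v) = 0" using d by simp
    then have "\<forall>v\<in>B. e v = 0" using B(3) finB cv.dependent_finite by blast
    then show "\<forall>g\<in>G. c g = 0" using GH unfolding e_def by (metis Un_iff)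
  qed
  have "enat (card G) \<le> quot_dim V W"
    using qd_upper[OF _ Gi] SV B(2) by (auto simp: G_def)
  moreover have "enat (card H) \<le> quot_dim W U"
    using qd_upper[OF _ Hi] H(1) by auto
  ultimately have s: "enat (card G) + enat (card H) \<le> quot_dim V W + quot_dim W U"
    by (rule add_mono)
  have "enat (card F) \<le> enat (card G) + enat (card H)"
    using cardFB cardB by simp
  then show "enat (card F) \<le> quot_dim V W + quot_dim W U"
    using s by (rule order_trans)
qed

lemma qd_add:
  fixes V W U :: "'a::chilbert_space set"
  assumes "csub V" "csub W" "csub U" "U \<subseteq> W" "W \<subseteq> V"
  shows "quot_dim V U = quot_dim V W + quot_dim W U"
  using qd_add_le[OF assms(1-3)] qd_add_ge[OF assms(2,4,5)] by (rule order.antisym)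

definition hasproj :: "('a::chilbert_space \<times> 'a) set \<Rightarrow> bool" where
  "hasproj T \<longleftrightarrow> (\<forall>z. \<exists>p\<in>T. \<forall>q\<in>T. cinner (z - p) q = 0)"

lemma closed_hasproj: "closed_lin_rel T \<Longrightarrow> hasproj T"
  unfolding hasproj_def closed_lin_rel_def lin_rel_csub
  by (intro allI proj_exists) (auto simp: csub_def)

lemma adj_iff: "(f, g) \<in> rel_adj T \<longleftrightarrow> (\<forall>x y. (x, y) \<in> T \<longrightarrow> cinner g x = cinner f y)"
  by (auto simp: rel_adj_def)

lemma lin_rel_adj: "lin_rel (rel_adj T)"
  unfolding lin_rel_def
  by (auto simp: adj_iff cinner_add_left cinner_scaleC_left)

lemma adj_swap: "S \<subseteq> rel_adj T \<Longrightarrow> T \<subseteq> rel_adj S"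
proof clarify
  fix f g assume ST: "S \<subseteq> rel_adj T" and fg: "(f, g) \<in> T"
  show "(f, g) \<in> rel_adj S" unfolding adj_iff
  proof clarify
    fix x y assume "(x, y) \<in> S"
    then have "cinner y f = cinner x g" using ST fg by (auto simp: adj_iff)
    then show "cinner g x = cinner f y" by (metis cinner_commute)
  qed
qed

lemma adj_anti: "S \<subseteq> T \<Longrightarrow> rel_adj T \<subseteq> rel_adj S"
  by (auto simp: rel_adj_def)

lemma adj_adj_sup: "T \<subseteq> rel_adj (rel_adj T)"
  by (rule adj_swap) simp

lemma adj_of_orth: "(\<forall>q\<in>T. cinner (f, g) q = 0) \<Longrightarrow> (- g, f) \<in> rel_adj T"
  unfolding adj_iff
proof clarify
  fix x y assume "\<forall>q\<in>T. cinner (f, g) q = 0" "(x, y) \<in> T"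
  then have "cinner f x + cinner g y = 0" by (auto simp: cinner_Pair)
  then show "cinner f x = cinner (- g) y" by (simp add: cinner_minus_left eq_neg_iff_add_eq_0)
qed

lemma orth_of_adj: "(u, v) \<in> rel_adj T \<Longrightarrow> q \<in> T \<Longrightarrow> cinner (v, - u) q = 0"
  by (cases q) (auto simp: adj_iff cinner_Pair cinner_minus_left)

lemma zero_of_neg: "cinner a a = - cinner b (b::'a::chilbert_space) \<Longrightarrow> a = 0 \<and> b = 0"
proof -
  assume h: "cinner a a = - cinner b b"
  then have "Re (cinner a a) = - Re (cinner b b)" by simp
  then have "(norm a)\<^sup>2 = - (norm b)\<^sup>2" by (simp add: norm_sq_cinner)
  then have "norm a = 0" "norm b = 0"
    by (smt (verit) zero_le_power2 zero_eq_power2 norm_ge_zero)+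
  then show ?thesis by simp
qed

lemma lin_relD:
  assumes "lin_rel T"
  shows "0 \<in> T" "p \<in> T \<Longrightarrow> q \<in> T \<Longrightarrow> p + q \<in> T" "p \<in> T \<Longrightarrow> scaleC c p \<in> T"
    "p \<in> T \<Longrightarrow> q \<in> T \<Longrightarrow> p - q \<in> T" "p \<in> T \<Longrightarrow> - p \<in> T"
  using assms unfolding lin_rel_csub
  by (auto intro: csub_0 csub_add csub_scale csub_diff csub_minus)

lemma adj_adj_sub:
  assumes T: "closed_lin_rel T"
  shows "rel_adj (rel_adj T) \<subseteq> T"
proof
  fix z assume z: "z \<in> rel_adj (rel_adj T)"
  obtain p where p: "p \<in> T" "\<forall>q\<in>T. cinner (z - p) q = 0"
    using closed_hasproj[OF T] unfolding hasproj_def by blast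
  obtain r1 r2 where r: "z - p = (r1, r2)" by (cases "z - p")
  have "p \<in> rel_adj (rel_adj T)" using p adj_adj_sup by blast
  then have rT: "(r1, r2) \<in> rel_adj (rel_adj T)"
    using lin_relD(4)[OF lin_rel_adj z] r by metis
  have "(- r2, r1) \<in> rel_adj T" using adj_of_orth p(2) r by metis
  then have "cinner r2 (- r2) = cinner r1 r1" using rT by (auto simp: adj_iff)
  then have "r1 = 0 \<and> r2 = 0" using zero_of_neg[of r1 r2] by (simp add: cinner_minus_right)
  then have "z - p = 0" using r by (simp add: zero_prod_def)
  then have "z = p" by simp
  then show "z \<in> T" using p by simp
qed

lemma hasproj_adj:
  assumes T: "lin_rel T" and P: "hasproj T"
  shows "hasproj (rel_adj T)"
  unfolding hasproj_def
proof
  fix z :: "'a \<times> 'a"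
  obtain z1 z2 where zz: "z = (z1, z2)" by (cases z)
  obtain a where a: "a \<in> T" "\<forall>q\<in>T. cinner ((z2, - z1) - a) q = 0"
    using P unfolding hasproj_def by blast
  obtain a1 a2 where aa: "a = (a1, a2)" by (cases a)
  have "(- (- z1 - a2), z2 - a1) \<in> rel_adj T"
    using adj_of_orth[of T "z2 - a1" "- z1 - a2"] a(2) aa by simp
  then have inT: "(z1 + a2, z2 - a1) \<in> rel_adj T" by (simp add: algebra_simps)
  have "\<forall>q\<in>rel_adj T. cinner (z - (z1 + a2, z2 - a1)) q = 0"
  proof clarify
    fix f g assume fg: "(f, g) \<in> rel_adj T"
    then have "cinner g a1 = cinner f a2" using a(1) aa by (auto simp: adj_iff)
    then have "cinner a1 g = cinner a2 f" by (metis cinner_commute)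
    then show "cinner (z - (z1 + a2, z2 - a1)) (f, g) = 0"
      by (simp add: zz cinner_Pair cinner_minus_left)
  qed
  then show "\<exists>p\<in>rel_adj T. \<forall>q\<in>rel_adj T. cinner (z - p) q = 0" using inT by blast
qed

lemma mul_mono: "S \<subseteq> T \<Longrightarrow> rel_mul S \<subseteq> rel_mul T" by (auto simp: rel_mul_def)
lemma dom_mono: "S \<subseteq> T \<Longrightarrow> rel_dom S \<subseteq> rel_dom T" by (auto simp: rel_dom_def)

lemma dom_csub: "lin_rel T \<Longrightarrow> csub (rel_dom T)"
  unfolding csub_def rel_dom_def
proof (intro conjI ballI allI; clarsimp)
  assume T: "lin_rel T"
  show "\<exists>y. (0, y) \<in> T" using lin_relD(1)[OF T] by (auto simp: zero_prod_def)
  fix x y x' y' assume "(x, y) \<in> T" "(x', y') \<in> T"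
  then show "\<exists>z. (x + x', z) \<in> T" using lin_relD(2)[OF T] by fastforce
next
  fix c x y assume T: "lin_rel T" and "(x, y) \<in> T"
  then show "\<exists>z. (scaleC c x, z) \<in> T" using lin_relD(3)[OF T, of "(x, y)" c] by auto
qed

lemma decomp_mul:
  assumes B: "closed_lin_rel B"
  shows "\<exists>y1. (0, y1) \<in> B \<and> (\<forall>m. (0, m) \<in> B \<longrightarrow> cinner (y - y1) m = 0)"
proof -
  have eq: "rel_inf B = B \<inter> ({0} \<times> UNIV)" by (auto simp: rel_inf_def)
  have cl: "closed_lin_rel (rel_inf B)"
  proof -
    have "closed (B \<inter> ({0} \<times> UNIV))"
      using B by (intro closed_Int closed_Times) (auto simp: closed_lin_rel_def)
    moreover have "lin_rel (B \<inter> ({0} \<times> UNIV))"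
      using B unfolding closed_lin_rel_def lin_rel_def by auto (metis scaleC_zero_right)
    ultimately show ?thesis using eq by (simp add: closed_lin_rel_def)
  qed
  obtain p where p: "p \<in> rel_inf B" "\<forall>q\<in>rel_inf B. cinner ((0, y) - p) q = 0"
    using closed_hasproj[OF cl] unfolding hasproj_def by blast
  obtain y1 where py: "p = (0, y1)" using p(1) by (cases p) (auto simp: rel_inf_def)
  have "(0, y1) \<in> B" using p(1) py by (simp add: rel_inf_def)
  moreover have "cinner (y - y1) m = 0" if "(0, m) \<in> B" for m
    using p(2) that py by (auto simp: rel_inf_def cinner_Pair)
  ultimately show ?thesis by blast
qed

lemma mul_sub:
  assumes B: "closed_lin_rel B" and BA: "B \<subseteq> rel_adj A"
    and hs: "rel_restrict (rel_s (rel_adj A)) (rel_dom B) = rel_s B"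
    and hk: "rel_mul (rel_adj A) \<inter> rel_ker (rel_adj B) = {0}"
  shows "rel_mul (rel_adj A) \<subseteq> rel_mul B"
proof
  have LB: "lin_rel B" using B by (simp add: closed_lin_rel_def)
  fix m assume "m \<in> rel_mul (rel_adj A)"
  then have m: "(0, m) \<in> rel_adj A" by (simp add: rel_mul_def)
  obtain y1 where y1: "(0, y1) \<in> B" "\<And>m'. (0, m') \<in> B \<Longrightarrow> cinner (m - y1) m' = 0"
    using decomp_mul[OF B, of m] by blast
  define q where "q = m - y1"
  have "(0, m) - (0, y1) \<in> rel_adj A"
    using lin_relD(4)[OF lin_rel_adj m] y1(1) BA by blast
  then have qA: "(0, q) \<in> rel_adj A" by (simp add: q_def)
  have "cinner q y = 0" if xy: "(x, y) \<in> B" for x y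
  proof -
    obtain y1' where y1': "(0, y1') \<in> B" "\<And>m'. (0, m') \<in> B \<Longrightarrow> cinner (y - y1') m' = 0"
      using decomp_mul[OF B, of y] by blast
    have "(x, y) - (0, y1') \<in> B" using lin_relD(4)[OF LB xy y1'(1)] .
    then have xy2: "(x, y - y1') \<in> B" by simp
    have "(x, y - y1') \<in> rel_s B"
      using xy2 y1'(2) by (auto simp: rel_s_def orth_diff_def rel_inf_def cinner2_def)
    then have "(x, y - y1') \<in> rel_s (rel_adj A)" using hs by (auto simp: rel_restrict_def)
    moreover have "(0, q) \<in> rel_inf (rel_adj A)" using qA by (simp add: rel_inf_def)
    ultimately have "cinner2 (x, y - y1') (0, q) = 0" by (auto simp: rel_s_def orth_diff_def)
    then have c2: "cinner (y - y1') q = 0" by (simp add: cinner2_def)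
    have c1: "cinner q y1' = 0" using y1(2)[OF y1'(1)] by (simp add: q_def)
    have "cinner q y = cinner q y1' + cinner q (y - y1')" by (simp add: cinner_diff_right)
    also have "\<dots> = 0" using c1 c2 by (metis add_0 cinner_commute complex_cnj_zero)
    finally show ?thesis .
  qed
  then have "(q, 0) \<in> rel_adj B" by (auto simp: adj_iff)
  then have "q \<in> rel_mul (rel_adj A) \<inter> rel_ker (rel_adj B)" using qA by (simp add: rel_mul_def rel_ker_def)
  then have "q = 0" using hk by blast
  then show "m \<in> rel_mul B" using y1(1) by (simp add: q_def rel_mul_def)
qed

lemma csub_K:
  assumes P: "lin_rel P"
  shows "csub {r \<in> rel_adj Q. \<forall>q\<in>P. cinner r q = 0}"
  using lin_relD[OF lin_rel_adj[of Q]]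
  by (auto simp: csub_def cinner_add_left cinner_scaleC_left)

lemma csub_phi:
  assumes K: "csub K"
  shows "csub {u::'a::chilbert_space \<times> 'a. (fst u, - snd u) \<in> K}"
  unfolding csub_def
proof (intro conjI ballI allI)
  show "0 \<in> {u::'a \<times> 'a. (fst u, - snd u) \<in> K}" using csub_0[OF K] by (simp add: zero_prod_def)
next
  fix u v :: "'a \<times> 'a" assume "u \<in> {u. (fst u, - snd u) \<in> K}" "v \<in> {u. (fst u, - snd u) \<in> K}"
  then have "(fst u, - snd u) + (fst v, - snd v) \<in> K" using csub_add[OF K] by blast
  then show "u + v \<in> {u. (fst u, - snd u) \<in> K}" by (simp add: algebra_simps)
next
  fix c and u :: "'a \<times> 'a" assume "u \<in> {u. (fst u, - snd u) \<in> K}"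
  then have "scaleC c (fst u, - snd u) \<in> K" using csub_scale[OF K] by blast
  then show "scaleC c u \<in> {u. (fst u, - snd u) \<in> K}" by (simp add: scaleC_minus_right scaleC_prod_def)
qed

lemma G:
  assumes P: "lin_rel P" "hasproj P" and Q: "lin_rel Q" and PQ: "P \<subseteq> rel_adj Q"
    and mul: "rel_mul (rel_adj P) \<subseteq> rel_mul Q"
  shows "quot_dim (rel_dom (rel_adj Q)) (rel_dom P) \<le> quot_dim (rel_dom (rel_adj P)) (rel_dom Q)"
proof (rule qd_transfer[where R = "{u. (fst u, - snd u) \<in> {r \<in> rel_adj Q. \<forall>q\<in>P. cinner r q = 0}}"])
  show "csub {u. (fst u, - snd u) \<in> {r \<in> rel_adj Q. \<forall>q\<in>P. cinner r q = 0}}"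
    by (rule csub_phi[OF csub_K[OF P(1)]])
  show "csub (rel_dom P)" using dom_csub P(1) .
  show "0 \<in> rel_dom Q" using csub_0[OF dom_csub[OF Q]] .
next
  fix x assume "x \<in> rel_dom (rel_adj Q)"
  then obtain y where xy: "(x, y) \<in> rel_adj Q" by (auto simp: rel_dom_def)
  obtain p where p: "p \<in> P" "\<forall>q\<in>P. cinner ((x, y) - p) q = 0"
    using P(2) unfolding hasproj_def by blast
  obtain p1 p2 where pp: "p = (p1, p2)" by (cases p)
  have "(x, y) - p \<in> rel_adj Q" using lin_relD(4)[OF lin_rel_adj xy] p(1) PQ by blast
  then have inQ: "(x - p1, y - p2) \<in> rel_adj Q" by (simp add: pp)
  have orth: "\<forall>q\<in>P. cinner (x - p1, y - p2) q = 0" using p(2) by (simp add: pp)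
  have "(- (y - p2), x - p1) \<in> rel_adj P" using adj_of_orth[OF orth] .
  then have "- (y - p2) \<in> rel_dom (rel_adj P)" by (auto simp: rel_dom_def)
  moreover have "x - (x - p1) \<in> rel_dom P" using p(1) pp by (auto simp: rel_dom_def)
  moreover have "(x - p1, - (y - p2)) \<in> {u. (fst u, - snd u) \<in> {r \<in> rel_adj Q. \<forall>q\<in>P. cinner r q = 0}}"
    using inQ orth by simp
  ultimately show "\<exists>w x'. (w, x') \<in> {u. (fst u, - snd u) \<in> {r \<in> rel_adj Q. \<forall>q\<in>P. cinner r q = 0}}
        \<and> x' \<in> rel_dom (rel_adj P) \<and> x - w \<in> rel_dom P" by blast
next
  fix w x' assume R: "(w, x') \<in> {u. (fst u, - snd u) \<in> {r \<in> rel_adj Q. \<forall>q\<in>P. cinner r q = 0}}"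
    and "x' \<in> rel_dom Q"
  then obtain h where xh: "(x', h) \<in> Q" by (auto simp: rel_dom_def)
  have QP: "Q \<subseteq> rel_adj P" using adj_swap[OF PQ] .
  have "(- (- x'), w) \<in> rel_adj P" using R adj_of_orth[of P w "- x'"] by simp
  then have xw: "(x', w) \<in> rel_adj P" by simp
  have "(x', w) - (x', h) \<in> rel_adj P" using lin_relD(4)[OF lin_rel_adj xw] xh QP by blast
  then have "w - h \<in> rel_mul (rel_adj P)" by (simp add: rel_mul_def)
  then have "(0, w - h) \<in> Q" using mul by (auto simp: rel_mul_def)
  then have "(x', h) + (0, w - h) \<in> Q" using lin_relD(2)[OF Q xh] by blast
  then have "(x', w) \<in> Q" by simp
  moreover have "(w, - x') \<in> rel_adj Q" using R by simp
  ultimately have "cinner (- x') x' = cinner w w" by (auto simp: adj_iff)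
  then have "w = 0" using zero_of_neg[of w x'] by (simp add: cinner_minus_left)
  then show "w \<in> rel_dom P" using csub_0[OF dom_csub[OF P(1)]] by simp
qed

theorem theorem3p1:
  fixes A B At :: "('a::chilbert_space \<times> 'a) set"
  assumes "closed_lin_rel A" and "closed_lin_rel B"
    and "dual_pair A B"
    and "rel_restrict (rel_s (rel_adj A)) (rel_dom B) = rel_s B"
    and "rel_restrict (rel_s (rel_adj B)) (rel_dom A) = rel_s A"
    and "rel_mul (rel_adj B) \<inter> rel_ker (rel_adj A) = {0}"
    and "rel_mul (rel_adj A) \<inter> rel_ker (rel_adj B) = {0}"
    and "At \<in> Ext A B"
  shows "def_num A B = quot_dim (rel_dom (rel_adj B)) (rel_dom At)
                        + quot_dim (rel_dom (rel_adj A)) (rel_dom (rel_adj At))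
       \<and> def_num A B = quot_dim (rel_dom At) (rel_dom A)
                        + quot_dim (rel_dom (rel_adj At)) (rel_dom B)
       \<and> (quasi_selfadjoint A B At \<longrightarrow>
            def_num A B = 2 * quot_dim (rel_dom (rel_adj B)) (rel_dom At)
          \<and> quot_dim (rel_dom (rel_adj B)) (rel_dom At)
              = quot_dim (rel_dom (rel_adj A)) (rel_dom (rel_adj At))
          \<and> quot_dim (rel_dom (rel_adj A)) (rel_dom (rel_adj At))
              = quot_dim (rel_dom At) (rel_dom A)
          \<and> quot_dim (rel_dom At) (rel_dom A)
              = quot_dim (rel_dom (rel_adj At)) (rel_dom B))"
proof -
  note cA = assms(1) and cB = assms(2)
  have LA: "lin_rel A" and LB: "lin_rel B" using cA cB by (auto simp: closed_lin_rel_def)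
  have AB: "A \<subseteq> rel_adj B" using assms(3) by (simp add: dual_pair_def)
  have BA: "B \<subseteq> rel_adj A" using adj_swap[OF AB] .
  have cAt: "closed_lin_rel At" and AAt: "A \<subseteq> At" and AtB: "At \<subseteq> rel_adj B"
    using assms(8) by (auto simp: Ext_def)
  have LAt: "lin_rel At" using cAt by (simp add: closed_lin_rel_def)
  have M1: "rel_mul (rel_adj A) \<subseteq> rel_mul B" using mul_sub[OF cB BA assms(4) assms(7)] .
  have M2: "rel_mul (rel_adj B) \<subseteq> rel_mul A" using mul_sub[OF cA AB assms(5) assms(6)] .
  have AtAt: "rel_adj (rel_adj At) = At" using adj_adj_sub[OF cAt] adj_adj_sup[of At] by blast
  have AtsAs: "rel_adj At \<subseteq> rel_adj A" using adj_anti[OF AAt] .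
  have BAts: "B \<subseteq> rel_adj At" using adj_swap[OF AtB] .
  define a where "a = quot_dim (rel_dom (rel_adj B)) (rel_dom At)"
  define b where "b = quot_dim (rel_dom (rel_adj A)) (rel_dom (rel_adj At))"
  define c where "c = quot_dim (rel_dom At) (rel_dom A)"
  define d where "d = quot_dim (rel_dom (rel_adj At)) (rel_dom B)"
  have ad: "a \<le> d" unfolding a_def d_def
    using G[OF LAt closed_hasproj[OF cAt] LB AtB] mul_mono[OF AtsAs] M1 by blast
  have da: "d \<le> a" unfolding a_def d_def
    using G[OF LB closed_hasproj[OF cB] LAt BAts] M2 mul_mono[OF AAt] by blast
  have cb: "c \<le> b"
  proof -
    have "A \<subseteq> rel_adj (rel_adj At)" using AAt AtAt by simp
    then have "quot_dim (rel_dom (rel_adj (rel_adj At))) (rel_dom A) \<le> b"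
      unfolding b_def using G[OF LA closed_hasproj[OF cA] lin_rel_adj] M1 mul_mono[OF BAts] by blast
    then show ?thesis using AtAt by (simp add: c_def)
  qed
  have bc: "b \<le> c"
  proof -
    have "rel_mul (rel_adj (rel_adj At)) \<subseteq> rel_mul A"
      using AtAt mul_mono[OF AtB] M2 by simp
    then have "b \<le> quot_dim (rel_dom (rel_adj (rel_adj At))) (rel_dom A)"
      unfolding b_def using G[OF lin_rel_adj hasproj_adj[OF LAt closed_hasproj[OF cAt]] LA AtsAs] by blast
    then show ?thesis using AtAt by (simp add: c_def)
  qed
  have n: "def_num A B = b + d" unfolding def_num_def b_def d_def
    using dom_mono[OF BAts] dom_mono[OF AtsAs]
    by (intro qd_add dom_csub lin_rel_adj LB) auto
  have "a = d" "b = c" using ad da bc cb by auto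
  then show ?thesis unfolding quasi_selfadjoint_def
    using n by (simp add: a_def[symmetric] b_def[symmetric] c_def[symmetric] d_def[symmetric] add.commute mult_2)
qed

end
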